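(* Let $W$ be a finite set and $\mathtt{N}=\{N_1,\ldots,N_r\}$ a sequence of subsets of $W$ with $N_1\cup\cdots\cup N_r=W$. Put $M_i=N_i-(N_1\cup\cdots\cup N_{i-1})$, $\mathtt{M}=\{M_1,\ldots,M_r\}$, and $U=\widetilde{M}_2\cup\cdots\cup\widetilde{M}_r$. Then $$\mathbb{R}\mathcal{Z}_{K(\mathtt{M})}\cong S^{|M_1|}\times\cdots\times S^{|M_r|},\qquad\mathbb{R}\mathcal{Z}_{K(\mathtt{M})_U}\cong S^{|M_2|}\times\cdots\times S^{|M_r|}.$$
   Context: For a sequence $\mathtt{N}=\{N_1,\ldots,N_r\}$ of subsets of $W$ (repetitions allowed), choose distinct points $a_1,\ldots,a_r\notin W$, $\widetilde{N}_i=N_i\sqcup\{a_i\}$; $K(\mathtt{N})$ is the simplicial complex on $W\sqcup\{a_1,\ldots,a_r\}$ with minimal non-faces exactly $\widetilde{N}_1,\ldots,\widetilde{N}_r$. $K(\mathtt{M})$ uses the same points, $\widetilde{M}_i=M_i\sqcup\{a_i\}$. For a vertex subset $U$, $K_U=\{\sigma\in K\mid\sigma\subset U\}$ as a complex on vertex set $U$. For a simplicial complex $K$ on vertex set $V$, the real moment-angle complex is $\mathbb{R}\mathcal{Z}_K=\bigcup_{\sigma\in K}\prod_{v\in V}Y_v$ with $Y_v=CS^0$ (reduced cone on $S^0$, an interval) if $v\in\sigma$ and $Y_v=S^0$ otherwise. *)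

theory Defs
  imports "HOL-Analysis.Analysis"
begin

text \<open>Vertices of K(N): the points of W are tagged Inl w, the extra points a_i are Inr i.
  The sequence N_1,...,N_r is a function N :: nat => 'a set used on indices 1..r.\<close>

definition tilde :: "(nat \<Rightarrow> 'a set) \<Rightarrow> nat \<Rightarrow> ('a + nat) set" where
  "tilde N i = Inl ` N i \<union> {Inr i}"

definition KVerts :: "'a set \<Rightarrow> nat \<Rightarrow> ('a + nat) set" where
  "KVerts W r = Inl ` W \<union> Inr ` {1..r}"

text \<open>K(N): the simplicial complex on KVerts W r whose minimal non-faces are exactly
  the sets tilde N i, i = 1..r (faces = subsets containing no tilde N i).\<close>
definition KN :: "'a set \<Rightarrow> nat \<Rightarrow> (nat \<Rightarrow> 'a set) \<Rightarrow> ('a + nat) set set" where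
  "KN W r N = {\<sigma>. \<sigma> \<subseteq> KVerts W r \<and> (\<forall>i\<in>{1..r}. \<not> tilde N i \<subseteq> \<sigma>)}"

definition full_sub :: "'v set set \<Rightarrow> 'v set \<Rightarrow> 'v set set" where
  "full_sub K U = {\<sigma> \<in> K. \<sigma> \<subseteq> U}"

text \<open>Real moment-angle complex of K on vertex set V, as a subspace of [-1,1]^V:
  CS^0 = [-1,1], S^0 = {-1,1}.\<close>
definition RZ_set :: "'v set set \<Rightarrow> 'v set \<Rightarrow> ('v \<Rightarrow> real) set" where
  "RZ_set K V = (\<Union>\<sigma>\<in>K. PiE V (\<lambda>v. if v \<in> \<sigma> then {-1..1} else {-1, 1}))"

definition RZ :: "'v set set \<Rightarrow> 'v set \<Rightarrow> ('v \<Rightarrow> real) topology" where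
  "RZ K V = subtopology (product_topology (\<lambda>_. euclideanreal) V) (RZ_set K V)"

definition nsphere :: "nat \<Rightarrow> (nat \<Rightarrow> real) topology" where
  "nsphere n = subtopology (product_topology (\<lambda>_. euclideanreal) {..n})
      {x \<in> PiE {..n} (\<lambda>_. UNIV). (\<Sum>i\<le>n. (x i)\<^sup>2) = 1}"

end

theory Submission
  imports Defs
begin


lemma homeomorphic_space_product:
  assumes "\<forall>i\<in>I. X i homeomorphic_space Y i"
  shows "product_topology X I homeomorphic_space product_topology Y I"
proof -
  from assms obtain f g where fg: "\<forall>i\<in>I. homeomorphic_maps (X i) (Y i) (f i) (g i)"
    unfolding homeomorphic_space_def by metis
  let ?F = "\<lambda>x. restrict (\<lambda>i. f i (x i)) I"
  let ?G = "\<lambda>y. restrict (\<lambda>i. g i (y i)) I"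
  have c1: "continuous_map (product_topology X I) (product_topology Y I) ?F"
    unfolding continuous_map_componentwise
  proof (intro conjI ballI)
    show "?F ` topspace (product_topology X I) \<subseteq> extensional I" by auto
  next
    fix k assume k: "k \<in> I"
    have "continuous_map (product_topology X I) (Y k) (f k \<circ> (\<lambda>x. x k))"
      using k fg by (intro continuous_map_compose[OF continuous_map_product_projection]) (auto simp: homeomorphic_maps_def)
    then show "continuous_map (product_topology X I) (Y k) (\<lambda>x. ?F x k)"
      using k by (simp add: o_def)
  qed
  have c2: "continuous_map (product_topology Y I) (product_topology X I) ?G"
    unfolding continuous_map_componentwise
  proof (intro conjI ballI)
    show "?G ` topspace (product_topology Y I) \<subseteq> extensional I" by auto
  next
    fix k assume k: "k \<in> I"
    have "continuous_map (product_topology Y I) (X k) (g k \<circ> (\<lambda>x. x k))"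
      using k fg by (intro continuous_map_compose[OF continuous_map_product_projection]) (auto simp: homeomorphic_maps_def)
    then show "continuous_map (product_topology Y I) (X k) (\<lambda>x. ?G x k)"
      using k by (simp add: o_def)
  qed
  have i1: "?G (?F x) = x" if "x \<in> topspace (product_topology X I)" for x
  proof
    fix i show "?G (?F x) i = x i"
      using that fg by (auto simp: homeomorphic_maps_def PiE_iff extensional_def)
  qed
  have i2: "?F (?G x) = x" if "x \<in> topspace (product_topology Y I)" for x
  proof
    fix i show "?F (?G x) i = x i"
      using that fg by (auto simp: homeomorphic_maps_def PiE_iff extensional_def)
  qed
  show ?thesis unfolding homeomorphic_space_def homeomorphic_maps_def
    using c1 c2 i1 i2 by blast
qed

lemma continuous_map_Max:
  assumes "finite T" "T \<noteq> {}" "\<And>v. v \<in> T \<Longrightarrow> continuous_map X euclideanreal (f v)"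
  shows "continuous_map X euclideanreal (\<lambda>x. Max ((\<lambda>v. f v x) ` T))"
  using assms
proof (induction T rule: finite_ne_induct)
  case (singleton a)
  then show ?case by simp
next
  case (insert a S)
  have "continuous_map X euclideanreal (\<lambda>x. max (f a x) (Max ((\<lambda>v. f v x) ` S)))"
    using insert by (intro continuous_map_real_max) auto
  then show ?case using insert by simp
qed


definition cubeS :: "'v set \<Rightarrow> ('v \<Rightarrow> real) set" where
  "cubeS T = {y \<in> PiE T (\<lambda>_. {-1..1}). \<exists>v\<in>T. \<bar>y v\<bar> = 1}"
definition sphS :: "'v set \<Rightarrow> ('v \<Rightarrow> real) set" where
  "sphS T = {y \<in> PiE T (\<lambda>_. UNIV). (\<Sum>v\<in>T. (y v)\<^sup>2) = 1}"
definition cubeT :: "'v set \<Rightarrow> ('v \<Rightarrow> real) topology" where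
  "cubeT T = subtopology (product_topology (\<lambda>_. euclideanreal) T) (cubeS T)"
definition sphT :: "'v set \<Rightarrow> ('v \<Rightarrow> real) topology" where
  "sphT T = subtopology (product_topology (\<lambda>_. euclideanreal) T) (sphS T)"

lemma nsphere_sphT: "nsphere n = sphT {..n}"
  by (simp add: nsphere_def sphT_def sphS_def)

lemma cube_sph:
  assumes T: "finite T" "T \<noteq> {}"
  shows "cubeT T homeomorphic_space sphT T"
proof -
  define s where "s = (\<lambda>x. sqrt (\<Sum>v\<in>T. (x v)\<^sup>2) :: real)"
  define m where "m = (\<lambda>x::_\<Rightarrow>real. Max ((\<lambda>v. \<bar>x v\<bar>) ` T))"
  define F where "F = (\<lambda>x. restrict (\<lambda>v. x v / s x) T)"
  define G where "G = (\<lambda>x. restrict (\<lambda>v. x v / m x) T)"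
  have tc: "topspace (cubeT T) = cubeS T"
    by (auto simp: cubeT_def cubeS_def)
  have ts: "topspace (sphT T) = sphS T"
    by (auto simp: sphT_def sphS_def)
  have m_le: "\<bar>x v\<bar> \<le> m x" if "v \<in> T" for x v
    unfolding m_def using T that by (intro Max_ge) auto
  obtain mv where mv: "\<And>x. mv x \<in> T" "\<And>x. \<bar>x (mv x)\<bar> = m x"
  proof -
    have "\<forall>x. \<exists>v\<in>T. \<bar>x v\<bar> = m x"
    proof
      fix x
      have "m x \<in> (\<lambda>v. \<bar>x v\<bar>) ` T" unfolding m_def using T by (intro Max_in) auto
      then show "\<exists>v\<in>T. \<bar>x v\<bar> = m x" by auto
    qed
    then show ?thesis using that by metis
  qed
  have mcube: "m x = 1" if "x \<in> cubeS T" for x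
  proof -
    from that obtain v where v: "v \<in> T" "\<bar>x v\<bar> = 1" by (auto simp: cubeS_def)
    have "\<forall>w\<in>T. \<bar>x w\<bar> \<le> 1" using that by (auto simp: cubeS_def PiE_iff)
    then have "m x \<le> 1" using mv by metis
    moreover have "1 \<le> m x" using m_le[OF v(1), of x] v by simp
    ultimately show ?thesis by simp
  qed
  have s_pos: "s x > 0" if "x \<in> cubeS T" for x
  proof -
    from that obtain v where v: "v \<in> T" "\<bar>x v\<bar> = 1" by (auto simp: cubeS_def)
    have "(x v)\<^sup>2 \<le> (\<Sum>w\<in>T. (x w)\<^sup>2)"
      using T v by (intro member_le_sum) auto
    moreover have "(x v)\<^sup>2 = 1" using v by (metis power2_abs one_power2)
    ultimately show ?thesis unfolding s_def by simp
  qed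
  have m_pos: "m x > 0" if "x \<in> sphS T" for x
  proof (rule ccontr)
    assume "\<not> m x > 0"
    then have "\<forall>v\<in>T. x v = 0" using m_le[of _ x] by (metis abs_ge_zero abs_le_zero_iff order_trans not_less)
    then have "(\<Sum>v\<in>T. (x v)\<^sup>2) = 0" by simp
    with that show False by (simp add: sphS_def)
  qed
  have Fin: "F x \<in> sphS T" if "x \<in> cubeS T" for x
  proof -
    have sp: "s x > 0" using s_pos[OF that] .
    have "(\<Sum>v\<in>T. (x v / s x)\<^sup>2) = (\<Sum>v\<in>T. (x v)\<^sup>2) / (s x)\<^sup>2"
      by (simp add: power_divide sum_divide_distrib)
    also have "(s x)\<^sup>2 = (\<Sum>v\<in>T. (x v)\<^sup>2)" unfolding s_def by (simp add: sum_nonneg)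
    finally have "(\<Sum>v\<in>T. (x v / s x)\<^sup>2) = 1" using sp by (simp add: s_def)
    then show ?thesis by (simp add: sphS_def F_def)
  qed
  have Gin: "G y \<in> cubeS T" if "y \<in> sphS T" for y
  proof -
    have mp: "m y > 0" using m_pos[OF that] .
    have "\<forall>v\<in>T. G y v \<in> {-1..1}"
    proof
      fix v assume v: "v \<in> T"
      have "\<bar>y v\<bar> / m y \<le> 1" using m_le[OF v, of y] mp by simp
      then show "G y v \<in> {-1..1}" using v mp by (simp add: G_def abs_le_iff divide_le_eq le_divide_eq)
    qed
    moreover have "\<bar>G y (mv y)\<bar> = 1" using mv[of y] mp by (simp add: G_def)
    ultimately show ?thesis using mv(1)[of y] by (auto simp: cubeS_def G_def PiE_iff)
  qed
  have GF: "G (F x) = x" if "x \<in> cubeS T" for x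
  proof -
    have sp: "s x > 0" using s_pos[OF that] .
    have "m (F x) = 1 / s x"
      unfolding m_def
    proof (rule Max_eqI)
      show "finite ((\<lambda>v. \<bar>F x v\<bar>) ` T)" using T by simp
      show "z \<le> 1 / s x" if "z \<in> (\<lambda>v. \<bar>F x v\<bar>) ` T" for z
        using that \<open>x \<in> cubeS T\<close> sp by (auto simp: F_def cubeS_def PiE_iff divide_le_eq_1 abs_le_iff divide_right_mono)
      from \<open>x \<in> cubeS T\<close> obtain v where v: "v \<in> T" "\<bar>x v\<bar> = 1" by (auto simp: cubeS_def)
      then show "1 / s x \<in> (\<lambda>v. \<bar>F x v\<bar>) ` T" using sp
        by (auto simp: F_def intro!: image_eqI[of _ _ v])
    qed
    then show ?thesis using that sp
      by (auto simp: G_def F_def cubeS_def PiE_iff extensional_def fun_eq_iff)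
  qed
  have FG: "F (G y) = y" if "y \<in> sphS T" for y
  proof -
    have mp: "m y > 0" using m_pos[OF that] .
    have "(\<Sum>v\<in>T. (G y v)\<^sup>2) = (\<Sum>v\<in>T. (y v)\<^sup>2) / (m y)\<^sup>2"
      by (simp add: G_def power_divide sum_divide_distrib)
    also have "\<dots> = 1 / (m y)\<^sup>2" using that by (simp add: sphS_def)
    finally have "s (G y) = 1 / m y" using mp by (simp add: s_def real_sqrt_divide)
    then show ?thesis using that mp
      by (auto simp: G_def F_def sphS_def PiE_iff extensional_def fun_eq_iff)
  qed
  have cF: "continuous_map (cubeT T) (sphT T) F"
    unfolding sphT_def
  proof (rule continuous_map_into_subtopology)
    show "F \<in> topspace (cubeT T) \<rightarrow> sphS T" using Fin tc by auto
    show "continuous_map (cubeT T) (product_topology (\<lambda>_. euclideanreal) T) F"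
      unfolding continuous_map_componentwise
    proof (intro conjI ballI)
      show "F ` topspace (cubeT T) \<subseteq> extensional T" by (auto simp: F_def)
      fix k assume k: "k \<in> T"
      have sne: "\<And>x. x \<in> topspace (subtopology (product_topology (\<lambda>_. euclideanreal) T) (cubeS T)) \<Longrightarrow> s x \<noteq> 0"
        using s_pos tc unfolding cubeT_def by force
      have "continuous_map (cubeT T) euclideanreal (\<lambda>x. x k / s x)"
        unfolding cubeT_def
        using k T sne unfolding s_def
        by (intro continuous_intros) auto
      then show "continuous_map (cubeT T) euclideanreal (\<lambda>x. F x k)"
        using k by (simp add: F_def)
    qed
  qed
  have cG: "continuous_map (sphT T) (cubeT T) G"
    unfolding cubeT_def
  proof (rule continuous_map_into_subtopology)
    show "G \<in> topspace (sphT T) \<rightarrow> cubeS T" using Gin ts by auto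
    show "continuous_map (sphT T) (product_topology (\<lambda>_. euclideanreal) T) G"
      unfolding continuous_map_componentwise
    proof (intro conjI ballI)
      show "G ` topspace (sphT T) \<subseteq> extensional T" by (auto simp: G_def)
      fix k assume k: "k \<in> T"
      have cm: "continuous_map (sphT T) euclideanreal m"
        unfolding m_def sphT_def using T
        by (intro continuous_map_Max continuous_intros) auto
      have "continuous_map (sphT T) euclideanreal (\<lambda>x. x k / m x)"
        using k m_pos ts cm unfolding sphT_def
        by (intro continuous_intros) (auto, metis less_irrefl)
      then show "continuous_map (sphT T) euclideanreal (\<lambda>x. G x k)"
        using k by (simp add: G_def)
    qed
  qed
  show ?thesis unfolding homeomorphic_space_def homeomorphic_maps_def
    using cF cG GF FG tc ts by metis
qed

lemma sph_reindex:
  assumes h: "bij_betw h A T"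
  shows "sphT T homeomorphic_space sphT A"
proof -
  define h' where "h' = inv_into A h"
  have h': "bij_betw h' T A" unfolding h'_def using h by (rule bij_betw_inv_into)
  have hh: "\<And>a. a \<in> A \<Longrightarrow> h' (h a) = a" "\<And>t. t \<in> T \<Longrightarrow> h (h' t) = t"
    using h unfolding h'_def by (auto simp: bij_betw_def bij_betw_inv_into_right)
  define F where "F = (\<lambda>x::_\<Rightarrow>real. restrict (\<lambda>a. x (h a)) A)"
  define G where "G = (\<lambda>y::_\<Rightarrow>real. restrict (\<lambda>t. y (h' t)) T)"
  have hA: "\<And>a. a \<in> A \<Longrightarrow> h a \<in> T" using h by (auto simp: bij_betw_def)
  have hT: "\<And>t. t \<in> T \<Longrightarrow> h' t \<in> A" using h' by (auto simp: bij_betw_def)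
  have sF: "(\<Sum>a\<in>A. (x (h a))\<^sup>2) = (\<Sum>t\<in>T. (x t)\<^sup>2)" for x :: "_ \<Rightarrow> real"
    using sum.reindex_bij_betw[OF h, of "\<lambda>t. (x t)\<^sup>2"] by simp
  have sG: "(\<Sum>t\<in>T. (y (h' t))\<^sup>2) = (\<Sum>a\<in>A. (y a)\<^sup>2)" for y :: "_ \<Rightarrow> real"
    using sum.reindex_bij_betw[OF h', of "\<lambda>t. (y t)\<^sup>2"] by simp
  have ts: "topspace (sphT X) = sphS X" for X :: "'z set"
    by (auto simp: sphT_def sphS_def)
  have cF: "continuous_map (sphT T) (sphT A) F"
    unfolding sphT_def[of A]
  proof (rule continuous_map_into_subtopology)
    show "F \<in> topspace (sphT T) \<rightarrow> sphS A"
      using sF by (auto simp: ts sphS_def F_def)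
    show "continuous_map (sphT T) (product_topology (\<lambda>_. euclideanreal) A) F"
      unfolding continuous_map_componentwise
    proof (intro conjI ballI)
      show "F ` topspace (sphT T) \<subseteq> extensional A" by (auto simp: F_def)
      fix k assume k: "k \<in> A"
      have "continuous_map (sphT T) euclideanreal (\<lambda>x. x (h k))"
        unfolding sphT_def using hA[OF k] by (intro continuous_intros) auto
      then show "continuous_map (sphT T) euclideanreal (\<lambda>x. F x k)"
        using k by (simp add: F_def)
    qed
  qed
  have cG: "continuous_map (sphT A) (sphT T) G"
    unfolding sphT_def[of T]
  proof (rule continuous_map_into_subtopology)
    show "G \<in> topspace (sphT A) \<rightarrow> sphS T"
      using sG by (auto simp: ts sphS_def G_def)
    show "continuous_map (sphT A) (product_topology (\<lambda>_. euclideanreal) T) G"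
      unfolding continuous_map_componentwise
    proof (intro conjI ballI)
      show "G ` topspace (sphT A) \<subseteq> extensional T" by (auto simp: G_def)
      fix k assume k: "k \<in> T"
      have "continuous_map (sphT A) euclideanreal (\<lambda>x. x (h' k))"
        unfolding sphT_def using hT[OF k] by (intro continuous_intros) auto
      then show "continuous_map (sphT A) euclideanreal (\<lambda>x. G x k)"
        using k by (simp add: G_def)
    qed
  qed
  have GF: "G (F x) = x" if "x \<in> topspace (sphT T)" for x
    using that hh hT by (auto simp: ts sphS_def G_def F_def PiE_iff extensional_def fun_eq_iff)
  have FG: "F (G x) = x" if "x \<in> topspace (sphT A)" for x
    using that hh hA by (auto simp: ts sphS_def G_def F_def PiE_iff extensional_def fun_eq_iff)
  show ?thesis unfolding homeomorphic_space_def homeomorphic_maps_def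
    using cF cG GF FG by metis
qed

lemma cube_nsphere:
  assumes "finite T" "card T = Suc n"
  shows "cubeT T homeomorphic_space nsphere n"
proof -
  have "T \<noteq> {}" using assms by auto
  obtain h where h: "bij_betw h {..n} T"
  proof -
    have "finite {..n}" "card {..n} = card T" using assms by auto
    then show ?thesis using that assms(1) by (metis finite_same_card_bij)
  qed
  have "cubeT T homeomorphic_space sphT T" using cube_sph assms \<open>T \<noteq> {}\<close> by blast
  also have "sphT T homeomorphic_space sphT {..n}" using sph_reindex[OF h] .
  finally show ?thesis by (simp add: nsphere_sphT)
qed


lemma abs1: "\<bar>a::real\<bar> = 1 \<Longrightarrow> a \<in> {-1, 1}"
  by (cases "a \<ge> 0") auto

lemma RZ_set_char:
  assumes "\<forall>i\<in>I. T i \<subseteq> V"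
  shows "RZ_set {\<sigma>. \<sigma> \<subseteq> V \<and> (\<forall>i\<in>I. \<not> T i \<subseteq> \<sigma>)} V
       = {x \<in> PiE V (\<lambda>_. {-1..1}). \<forall>i\<in>I. \<exists>v\<in>T i. \<bar>x v\<bar> = 1}"
proof (rule set_eqI, rule iffI)
  fix x assume "x \<in> RZ_set {\<sigma>. \<sigma> \<subseteq> V \<and> (\<forall>i\<in>I. \<not> T i \<subseteq> \<sigma>)} V"
  then obtain \<sigma> where s: "\<sigma> \<subseteq> V" "\<forall>i\<in>I. \<not> T i \<subseteq> \<sigma>"
    and x: "x \<in> PiE V (\<lambda>v. if v \<in> \<sigma> then {-1..1} else {-1, 1})"
    unfolding RZ_set_def by blast
  have xv: "x v \<in> (if v \<in> \<sigma> then {-1..1} else {-1, 1})" if "v \<in> V" for v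
    using PiE_mem[OF x that] .
  have "x \<in> PiE V (\<lambda>_. {-1..1})"
  proof (rule PiE_I)
    fix v assume v: "v \<in> V"
    show "x v \<in> {-1..1}" using xv[OF v] by (cases "v \<in> \<sigma>") auto
  next
    fix v assume "v \<notin> V" then show "x v = undefined" using x by (simp add: PiE_def extensional_def)
  qed
  moreover have "\<exists>v\<in>T i. \<bar>x v\<bar> = 1" if i: "i \<in> I" for i
  proof -
    obtain v where v: "v \<in> T i" "v \<notin> \<sigma>" using s i by blast
    moreover have "v \<in> V" using assms i \<open>v \<in> T i\<close> by blast
    ultimately have "x v \<in> {-1, 1}" using xv[OF \<open>v \<in> V\<close>] by simp
    then have "\<bar>x v\<bar> = 1" by auto
    then show ?thesis using v(1) by blast
  qed
  ultimately show "x \<in> {x \<in> PiE V (\<lambda>_. {-1..1}). \<forall>i\<in>I. \<exists>v\<in>T i. \<bar>x v\<bar> = 1}" by blast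
next
  fix x :: "_ \<Rightarrow> real" assume x: "x \<in> {x \<in> PiE V (\<lambda>_. {-1..1}). \<forall>i\<in>I. \<exists>v\<in>T i. \<bar>x v\<bar> = 1}"
  define \<sigma> where "\<sigma> = {v \<in> V. \<bar>x v\<bar> \<noteq> 1}"
  have "\<sigma> \<in> {\<sigma>. \<sigma> \<subseteq> V \<and> (\<forall>i\<in>I. \<not> T i \<subseteq> \<sigma>)}"
    using x unfolding \<sigma>_def by blast
  moreover have "x \<in> PiE V (\<lambda>v. if v \<in> \<sigma> then {-1..1} else {-1, 1})"
  proof (rule PiE_I)
    fix v assume v: "v \<in> V"
    have "x v \<in> {-1..1}" using x v by (simp add: PiE_iff)
    then show "x v \<in> (if v \<in> \<sigma> then {-1..1} else {-1, 1})"
      using v abs1[of "x v"] unfolding \<sigma>_def by auto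
  next
    fix v assume "v \<notin> V" then show "x v = undefined" using x by (simp add: PiE_def extensional_def)
  qed
  ultimately show "x \<in> RZ_set {\<sigma>. \<sigma> \<subseteq> V \<and> (\<forall>i\<in>I. \<not> T i \<subseteq> \<sigma>)} V"
    unfolding RZ_set_def by blast
qed

lemma split_prod:
  assumes disj: "\<And>i j. i \<in> I \<Longrightarrow> j \<in> I \<Longrightarrow> i \<noteq> j \<Longrightarrow> T i \<inter> T j = {}"
    and V: "V = (\<Union>i\<in>I. T i)"
  shows "subtopology (product_topology (\<lambda>_. euclideanreal) V)
            {x \<in> PiE V (\<lambda>_. {-1..1}). \<forall>i\<in>I. \<exists>v\<in>T i. \<bar>x v\<bar> = 1}
         homeomorphic_space product_topology (\<lambda>i. cubeT (T i)) I"
proof -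
  define R where "R = {x \<in> PiE V (\<lambda>_. {-1..1::real}). \<forall>i\<in>I. \<exists>v\<in>T i. \<bar>x v\<bar> = 1}"
  define idx where "idx = (\<lambda>v. THE i. i \<in> I \<and> v \<in> T i)"
  have idx: "idx v = i" if "i \<in> I" "v \<in> T i" for i v
    unfolding idx_def using that disj by (intro the_equality) auto
  have idxI: "idx v \<in> I" "v \<in> T (idx v)" if "v \<in> V" for v
    using that idx V by auto
  define F where "F = (\<lambda>x::_\<Rightarrow>real. restrict (\<lambda>i. restrict x (T i)) I)"
  define G where "G = (\<lambda>z::_\<Rightarrow>_\<Rightarrow>real. restrict (\<lambda>v. z (idx v) v) V)"
  have tR: "topspace (subtopology (product_topology (\<lambda>_. euclideanreal) V) R) = R"
    by (auto simp: R_def)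
  have tc: "topspace (cubeT X) = cubeS X" for X :: "'z set"
    by (auto simp: cubeT_def cubeS_def)
  have tP: "topspace (product_topology (\<lambda>i. cubeT (T i)) I) = PiE I (\<lambda>i. cubeS (T i))"
    by (simp add: tc)
  have Fin: "F x \<in> PiE I (\<lambda>i. cubeS (T i))" if "x \<in> R" for x
    using that V by (fastforce simp: F_def R_def cubeS_def PiE_iff)
  have Gin: "G z \<in> R" if z: "z \<in> PiE I (\<lambda>i. cubeS (T i))" for z
  proof -
    have "G z v \<in> {-1..1}" if "v \<in> V" for v
      using z idxI[OF that] by (auto simp: G_def that PiE_iff cubeS_def)
    moreover have "\<exists>v\<in>T i. \<bar>G z v\<bar> = 1" if i: "i \<in> I" for i
    proof -
      obtain v where v: "v \<in> T i" "\<bar>z i v\<bar> = 1" using z i by (auto simp: PiE_iff cubeS_def)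
      have "v \<in> V" using V v i by auto
      then show ?thesis using v idx[OF i v(1)] by (auto simp: G_def)
    qed
    ultimately show ?thesis by (auto simp: R_def G_def PiE_iff)
  qed
  have cF: "continuous_map (subtopology (product_topology (\<lambda>_. euclideanreal) V) R)
              (product_topology (\<lambda>i. cubeT (T i)) I) F"
    unfolding continuous_map_componentwise
  proof (intro conjI ballI)
    show "F ` topspace (subtopology (product_topology (\<lambda>_. euclideanreal) V) R) \<subseteq> extensional I"
      by (auto simp: F_def)
    fix i assume i: "i \<in> I"
    show "continuous_map (subtopology (product_topology (\<lambda>_. euclideanreal) V) R) (cubeT (T i)) (\<lambda>x. F x i)"
      unfolding cubeT_def
    proof (rule continuous_map_into_subtopology)
      show "(\<lambda>x. F x i) \<in> topspace (subtopology (product_topology (\<lambda>_. euclideanreal) V) R) \<rightarrow> cubeS (T i)"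
        using Fin i tR by (auto simp: PiE_iff)
      show "continuous_map (subtopology (product_topology (\<lambda>_. euclideanreal) V) R)
              (product_topology (\<lambda>_. euclideanreal) (T i)) (\<lambda>x. F x i)"
        unfolding continuous_map_componentwise
      proof (intro conjI ballI)
        show "(\<lambda>x. F x i) ` topspace (subtopology (product_topology (\<lambda>_. euclideanreal) V) R) \<subseteq> extensional (T i)"
          using i by (auto simp: F_def)
        fix v assume v: "v \<in> T i"
        have "v \<in> V" using V v i by auto
        then have "continuous_map (subtopology (product_topology (\<lambda>_. euclideanreal) V) R) euclideanreal (\<lambda>x. x v)"
          by (intro continuous_intros) auto
        then show "continuous_map (subtopology (product_topology (\<lambda>_. euclideanreal) V) R) euclideanreal (\<lambda>x. F x i v)"
          using i v by (simp add: F_def)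
      qed
    qed
  qed
  have cG: "continuous_map (product_topology (\<lambda>i. cubeT (T i)) I)
              (subtopology (product_topology (\<lambda>_. euclideanreal) V) R) G"
  proof (rule continuous_map_into_subtopology)
    show "G \<in> topspace (product_topology (\<lambda>i. cubeT (T i)) I) \<rightarrow> R"
      using Gin tP by auto
    show "continuous_map (product_topology (\<lambda>i. cubeT (T i)) I) (product_topology (\<lambda>_. euclideanreal) V) G"
      unfolding continuous_map_componentwise
    proof (intro conjI ballI)
      show "G ` topspace (product_topology (\<lambda>i. cubeT (T i)) I) \<subseteq> extensional V"
        by (auto simp: G_def)
      fix v assume v: "v \<in> V"
      have c1: "continuous_map (product_topology (\<lambda>i. cubeT (T i)) I) (cubeT (T (idx v))) (\<lambda>z. z (idx v))"
        using idxI[OF v] by (intro continuous_map_product_projection) auto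
      have c2: "continuous_map (cubeT (T (idx v))) euclideanreal (\<lambda>y. y v)"
        unfolding cubeT_def using idxI[OF v] by (intro continuous_intros) auto
      have "continuous_map (product_topology (\<lambda>i. cubeT (T i)) I) euclideanreal ((\<lambda>y. y v) \<circ> (\<lambda>z. z (idx v)))"
        using continuous_map_compose[OF c1 c2] .
      then show "continuous_map (product_topology (\<lambda>i. cubeT (T i)) I) euclideanreal (\<lambda>z. G z v)"
        using v by (simp add: G_def o_def)
    qed
  qed
  have GF: "G (F x) = x" if "x \<in> R" for x
  proof
    fix v show "G (F x) v = x v"
      using that idxI[of v] by (auto simp: G_def F_def R_def PiE_iff extensional_def)
  qed
  have FG: "F (G z) = z" if z: "z \<in> PiE I (\<lambda>i. cubeS (T i))" for z
  proof
    fix i show "F (G z) i = z i"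
    proof (cases "i \<in> I")
      case True
      show ?thesis
      proof
        fix v show "F (G z) i v = z i v"
        proof (cases "v \<in> T i")
          case True
          then have "v \<in> V" using V \<open>i \<in> I\<close> by auto
          then show ?thesis using True \<open>i \<in> I\<close> idx[OF \<open>i \<in> I\<close> True] by (simp add: F_def G_def)
        next
          case False
          then show ?thesis using z \<open>i \<in> I\<close> by (auto simp: F_def PiE_iff cubeS_def extensional_def)
        qed
      qed
    next
      case False
      then show ?thesis using z by (auto simp: F_def PiE_iff extensional_def)
    qed
  qed
  have "homeomorphic_maps (subtopology (product_topology (\<lambda>_. euclideanreal) V) R)
          (product_topology (\<lambda>i. cubeT (T i)) I) F G"
    unfolding homeomorphic_maps_def
  proof (intro conjI ballI)
    show "continuous_map (subtopology (product_topology (\<lambda>_. euclideanreal) V) R)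
              (product_topology (\<lambda>i. cubeT (T i)) I) F" by (rule cF)
    show "continuous_map (product_topology (\<lambda>i. cubeT (T i)) I)
              (subtopology (product_topology (\<lambda>_. euclideanreal) V) R) G" by (rule cG)
    fix x assume "x \<in> topspace (subtopology (product_topology (\<lambda>_. euclideanreal) V) R)"
    then show "G (F x) = x" unfolding tR by (rule GF)
  next
    fix x assume "x \<in> topspace (product_topology (\<lambda>i. cubeT (T i)) I)"
    then show "F (G x) = x" unfolding tP by (rule FG)
  qed
  then show ?thesis unfolding R_def by (rule homeomorphic_maps_imp_homeomorphic_space)
qed

lemma general_RZ:
  assumes fin: "\<And>i. i \<in> I \<Longrightarrow> finite (T i)"
    and card: "\<And>i. i \<in> I \<Longrightarrow> card (T i) = Suc (n i)"
    and disj: "\<And>i j. i \<in> I \<Longrightarrow> j \<in> I \<Longrightarrow> i \<noteq> j \<Longrightarrow> T i \<inter> T j = {}"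
    and V: "V = (\<Union>i\<in>I. T i)"
    and K: "K = {\<sigma>. \<sigma> \<subseteq> V \<and> (\<forall>i\<in>I. \<not> T i \<subseteq> \<sigma>)}"
  shows "RZ K V homeomorphic_space product_topology (\<lambda>i. nsphere (n i)) I"
proof -
  have "RZ K V = subtopology (product_topology (\<lambda>_. euclideanreal) V)
            {x \<in> PiE V (\<lambda>_. {-1..1}). \<forall>i\<in>I. \<exists>v\<in>T i. \<bar>x v\<bar> = 1}"
  proof -
    have "\<forall>i\<in>I. T i \<subseteq> V" using V by auto
    then show ?thesis unfolding RZ_def K by (simp only: RZ_set_char)
  qed
  also have "\<dots> homeomorphic_space product_topology (\<lambda>i. cubeT (T i)) I"
    by (rule split_prod[OF disj V])
  also have "\<dots> homeomorphic_space product_topology (\<lambda>i. nsphere (n i)) I"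
  proof (intro homeomorphic_space_product ballI)
    fix i assume "i \<in> I"
    then show "cubeT (T i) homeomorphic_space nsphere (n i)" using cube_nsphere[OF fin card] by blast
  qed
  finally show ?thesis .
qed


theorem proposition4p4:
  fixes W :: "'a set" and r :: nat and N :: "nat \<Rightarrow> 'a set"
  assumes "finite W"
    and "\<forall>i\<in>{1..r}. N i \<subseteq> W"
    and "(\<Union>i\<in>{1..r}. N i) = W"
  defines "M \<equiv> (\<lambda>i. N i - (\<Union>j\<in>{1..<i}. N j))"
  defines "U \<equiv> (\<Union>i\<in>{2..r}. tilde M i)"
  shows "(RZ (KN W r M) (KVerts W r) homeomorphic_space
           product_topology (\<lambda>i. nsphere (card (M i))) {1..r}) \<and>
         (RZ (full_sub (KN W r M) U) U homeomorphic_space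
           product_topology (\<lambda>i. nsphere (card (M i))) {2..r})"
proof -
  have Msub: "M i \<subseteq> N i" for i by (auto simp: M_def)
  have finM: "finite (M i)" if "i \<in> {1..r}" for i
    using Msub[of i] assms(1,2) that by (meson finite_subset subset_trans)
  have Mdisj: "M i \<inter> M j = {}" if "i \<in> {1..r}" "j \<in> {1..r}" "i \<noteq> j" for i j
  proof (cases "i < j")
    case True
    then show ?thesis using that Msub[of i] by (auto simp: M_def)
  next
    case False
    then have "j < i" using that by simp
    then show ?thesis using that Msub[of j] by (auto simp: M_def)
  qed
  have Tdisj: "tilde M i \<inter> tilde M j = {}" if "i \<in> {1..r}" "j \<in> {1..r}" "i \<noteq> j" for i j
    using Mdisj[OF that] that(3) by (auto simp: tilde_def)
  have card: "card (tilde M i) = Suc (card (M i))" if "i \<in> {1..r}" for i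
  proof -
    have "tilde M i = insert (Inr i) (Inl ` M i)" by (auto simp: tilde_def)
    moreover have "card (Inl ` M i :: ('a + nat) set) = card (M i)"
      by (rule card_image) (simp add: inj_on_def)
    moreover have "card (insert (Inr i) (Inl ` M i)) = Suc (card (Inl ` M i :: ('a + nat) set))"
      using finM[OF that] by (intro card_insert_disjoint) auto
    ultimately show ?thesis by simp
  qed
  have finT: "finite (tilde M i)" if "i \<in> {1..r}" for i
    using finM[OF that] by (simp add: tilde_def)
  have V: "KVerts W r = (\<Union>i\<in>{1..r}. tilde M i)"
  proof (rule set_eqI, rule iffI)
    fix z assume z: "z \<in> KVerts W r"
    show "z \<in> (\<Union>i\<in>{1..r}. tilde M i)"
    proof (cases z)
      case (Inl w)
      then have w: "w \<in> W" using z by (auto simp: KVerts_def)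
      define S where "S = {i \<in> {1..r}. w \<in> N i}"
      have "S \<noteq> {}" using w assms(3) by (auto simp: S_def)
      then obtain i0 where i0: "i0 \<in> S" by blast
      define m where "m = (LEAST i. i \<in> S)"
      have mS: "m \<in> S" unfolding m_def using i0 by (rule LeastI)
      have "w \<notin> N j" if "j \<in> {1..<m}" for j
      proof
        assume "w \<in> N j"
        then have "j \<in> S" using that mS by (auto simp: S_def)
        then have "m \<le> j" unfolding m_def by (rule Least_le)
        then show False using that by auto
      qed
      then have "w \<in> M m" using mS by (auto simp: M_def S_def)
      then show ?thesis using Inl mS by (auto simp: tilde_def S_def)
    next
      case (Inr i)
      then show ?thesis using z by (auto simp: KVerts_def tilde_def)
    qed
  next
    fix z assume "z \<in> (\<Union>i\<in>{1..r}. tilde M i)"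
    then obtain i where i: "i \<in> {1..r}" "z \<in> tilde M i" by blast
    then have "M i \<subseteq> W" using Msub[of i] assms(2) by blast
    then show "z \<in> KVerts W r"
      using i by (auto simp: tilde_def KVerts_def)
  qed
  have K1: "KN W r M = {\<sigma>. \<sigma> \<subseteq> KVerts W r \<and> (\<forall>i\<in>{1..r}. \<not> tilde M i \<subseteq> \<sigma>)}"
    by (simp add: KN_def)
  have P1: "RZ (KN W r M) (KVerts W r) homeomorphic_space
           product_topology (\<lambda>i. nsphere (card (M i))) {1..r}"
    by (rule general_RZ[OF finT card Tdisj V K1])
  have UV: "U \<subseteq> KVerts W r" unfolding U_def V
  proof (rule UN_mono)
    show "{2..r} \<subseteq> {1..r}" by auto
  qed simp
  have r1: "Inr 1 \<notin> U" unfolding U_def by (auto simp: tilde_def)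
  have K2: "full_sub (KN W r M) U = {\<sigma>. \<sigma> \<subseteq> U \<and> (\<forall>i\<in>{2..r}. \<not> tilde M i \<subseteq> \<sigma>)}"
  proof (rule set_eqI, rule iffI)
    fix \<sigma> assume "\<sigma> \<in> full_sub (KN W r M) U"
    then show "\<sigma> \<in> {\<sigma>. \<sigma> \<subseteq> U \<and> (\<forall>i\<in>{2..r}. \<not> tilde M i \<subseteq> \<sigma>)}"
      by (auto simp: full_sub_def KN_def)
  next
    fix \<sigma> assume s: "\<sigma> \<in> {\<sigma>. \<sigma> \<subseteq> U \<and> (\<forall>i\<in>{2..r}. \<not> tilde M i \<subseteq> \<sigma>)}"
    have "\<not> tilde M i \<subseteq> \<sigma>" if i: "i \<in> {1..r}" for i
    proof (cases "i = 1")
      case True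
      have "Inr 1 \<in> tilde M 1" by (simp add: tilde_def)
      then show ?thesis using True s r1 by auto
    next
      case False
      then show ?thesis using s i by auto
    qed
    then show "\<sigma> \<in> full_sub (KN W r M) U"
      using s UV by (auto simp: full_sub_def KN_def)
  qed
  have P2: "RZ (full_sub (KN W r M) U) U homeomorphic_space
           product_topology (\<lambda>i. nsphere (card (M i))) {2..r}"
  proof (rule general_RZ[OF _ _ _ meta_eq_to_obj_eq[OF U_def] K2])
    fix i assume "i \<in> {2..r}"
    then have i: "i \<in> {1..r}" by auto
    show "finite (tilde M i)" by (rule finT[OF i])
    show "card (tilde M i) = Suc (card (M i))" by (rule card[OF i])
  next
    fix i j assume "i \<in> {2..r}" "j \<in> {2..r}" "i \<noteq> j"
    then show "tilde M i \<inter> tilde M j = {}" by (intro Tdisj) auto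
  qed
  show ?thesis using P1 P2 by blast
qed

end
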